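(* Let $\{w^k\}$ be generated by Algorithm 2 (running infinitely). Each accumulation point $\bar w$ of $\{w^k\}$ is feasible for (P) (i.e., $G(\bar w)\in C$ and $\bar w\in D$) provided one of the following holds: (a) $\{\rho_k\}$ is bounded; or (b) there is $B\in\mathbb R$ with $\mathcal L_{\rho_k}(w^{k+1},u^k)\le B$ for all $k\in\mathbb N$.
   Context: Standing setting: $\mathbb W,\mathbb Y$ Euclidean spaces; (P) is $\min f(w)$ s.t. $G(w)\in C$, $w\in D$, with $f\colon\mathbb W\to\mathbb R$, $G\colon\mathbb W\to\mathbb Y$ continuously differentiable, $C\subset\mathbb Y$ nonempty closed convex, $D\subset\mathbb W$ nonempty closed. $P_C$ is the Euclidean projection onto $C$, $d_C(y)=\|y-P_C(y)\|$; $\mathcal N^{\lim}_D(\bar w):=\limsup_{w\to\bar w}\operatorname{cone}(w-\Pi_D(w))$ for $\bar w\in D$ ($\Pi_D$ multivalued projection, outer set limit), $\varnothing$ for $\bar w\notin D$. Augmented Lagrangian $\mathcal L_\rho(w,\lambda):=f(w)+\frac\rho2 d_C^2(G(w)+\lambda/\rho)$; $V_\rho(w,u):=\|G(w)-P_C(G(w)+u/\rho)\|$. Algorithm 2: data $\rho_0>0$, $\beta>1$, $\eta\in(0,1)$, $w^0\in D$, a nonempty bounded set $U\subset\mathbb Y$. For $k=0,1,\dots$: choose $u^k\in U$; compute $w^{k+1}$ and $\varepsilon^{k+1}\in\mathbb W$ with $\varepsilon^{k+1}\in\nabla_w\mathcal L_{\rho_k}(w^{k+1},u^k)+\mathcal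 N^{\lim}_D(w^{k+1})$ (so $w^{k+1}\in D$); set $\lambda^{k+1}:=\rho_k[G(w^{k+1})+u^k/\rho_k-P_C(G(w^{k+1})+u^k/\rho_k)]$; if $k=0$ or $V_{\rho_k}(w^{k+1},u^k)\le\eta V_{\rho_{k-1}}(w^k,u^{k-1})$ set $\rho_{k+1}:=\rho_k$, else $\rho_{k+1}:=\beta\rho_k$. *)

theory Defs
  imports "HOL-Analysis.Analysis"
begin

definition C1_map :: "('a::euclidean_space \<Rightarrow> 'b::euclidean_space) \<Rightarrow> bool" where
  "C1_map F \<longleftrightarrow> (\<exists>F'. (\<forall>x. (F has_derivative blinfun_apply (F' x)) (at x)) \<and> continuous_on UNIV F')"

definition projC :: "'b::euclidean_space set \<Rightarrow> 'b \<Rightarrow> 'b" where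
  "projC C y = closest_point C y"

definition distC :: "'b::euclidean_space set \<Rightarrow> 'b \<Rightarrow> real" where
  "distC C y = norm (y - projC C y)"

definition proj_set :: "'a::euclidean_space set \<Rightarrow> 'a \<Rightarrow> 'a set" where
  "proj_set D w = {z \<in> D. \<forall>z'\<in>D. dist w z \<le> dist w z'}"

definition lim_normal_cone :: "'a::euclidean_space set \<Rightarrow> 'a \<Rightarrow> 'a set" where
  "lim_normal_cone D wb =
     (if wb \<in> D then
        {v. \<exists>ws vs. ws \<longlonglongrightarrow> wb \<and> vs \<longlonglongrightarrow> v \<and>
              (\<forall>k. vs k \<in> cone hull ((\<lambda>z. ws k - z) ` proj_set D (ws k)))}
      else {})"

definition AL :: "('a::euclidean_space \<Rightarrow> real) \<Rightarrow> ('a \<Rightarrow> 'b::euclidean_space) \<Rightarrow> 'b set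
                  \<Rightarrow> real \<Rightarrow> 'a \<Rightarrow> 'b \<Rightarrow> real" where
  "AL f G C \<rho> w lam = f w + \<rho> / 2 * (distC C (G w + (1 / \<rho>) *\<^sub>R lam))\<^sup>2"

definition Vfun :: "('a::euclidean_space \<Rightarrow> 'b::euclidean_space) \<Rightarrow> 'b set
                  \<Rightarrow> real \<Rightarrow> 'a \<Rightarrow> 'b \<Rightarrow> real" where
  "Vfun G C \<rho> w u = norm (G w - projC C (G w + (1 / \<rho>) *\<^sub>R u))"

end

theory Submission
  imports Defs
begin

theorem mainTheorem7:
  fixes f :: "'a::euclidean_space \<Rightarrow> real"
    and G :: "'a \<Rightarrow> 'b::euclidean_space"
    and C :: "'b set" and D :: "'a set"
    and \<beta> \<eta> :: real and U :: "'b set"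
    and w \<epsilon> :: "nat \<Rightarrow> 'a" and u lam :: "nat \<Rightarrow> 'b" and \<rho> :: "nat \<Rightarrow> real"
  assumes f_C1: "C1_map f" and G_C1: "C1_map G"
    and C_ne: "C \<noteq> {}" and C_closed: "closed C" and C_convex: "convex C"
    and D_ne: "D \<noteq> {}" and D_closed: "closed D"
    and rho0: "\<rho> 0 > 0" and beta: "\<beta> > 1" and eta: "0 < \<eta>" "\<eta> < 1"
    and w0: "w 0 \<in> D"
    and U_ne: "U \<noteq> {}" and U_bdd: "bounded U"
    and u_in: "\<And>k. u k \<in> U"
    and subprob: "\<And>k. \<exists>g. ((\<lambda>x. AL f G C (\<rho> k) x (u k)) has_derivative (\<lambda>h. g \<bullet> h)) (at (w (Suc k)))
                          \<and> \<epsilon> (Suc k) - g \<in> lim_normal_cone D (w (Suc k))"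
    and lam_def: "\<And>k. lam (Suc k) = \<rho> k *\<^sub>R (G (w (Suc k)) + (1 / \<rho> k) *\<^sub>R u k
                          - projC C (G (w (Suc k)) + (1 / \<rho> k) *\<^sub>R u k))"
    and rho_upd: "\<And>k. \<rho> (Suc k) =
        (if k = 0 \<or> Vfun G C (\<rho> k) (w (Suc k)) (u k) \<le> \<eta> * Vfun G C (\<rho> (k - 1)) (w k) (u (k - 1))
         then \<rho> k else \<beta> * \<rho> k)"
    and hyp: "bounded (range \<rho>) \<or> (\<exists>B. \<forall>k. AL f G C (\<rho> k) (w (Suc k)) (u k) \<le> B)"
    and acc: "strict_mono r" "(w \<circ> r) \<longlonglongrightarrow> wbar"
  shows "G wbar \<in> C \<and> wbar \<in> D"
proof -
  have contI: "\<And>x. isCont F x" if "C1_map F" for F :: "'a \<Rightarrow> 'c::euclidean_space"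
    using that unfolding C1_map_def by (meson has_derivative_continuous)
  have Gc: "\<And>x. isCont G x" using contI[OF G_C1] .
  have fc: "\<And>x. isCont f x" using contI[OF f_C1] .
  have wD: "w k \<in> D" for k
  proof (cases k)
    case 0 then show ?thesis using w0 by simp
  next
    case (Suc m)
    from subprob[of m] obtain g where "\<epsilon> (Suc m) - g \<in> lim_normal_cone D (w (Suc m))" by blast
    then show ?thesis unfolding Suc lim_normal_cone_def by (auto split: if_splits)
  qed
  have wbarD: "wbar \<in> D"
    using closed_sequentially[OF D_closed _ acc(2)] wD by simp
  have rpos: "\<rho> k > 0" for k
    by (induction k) (use rho0 beta in \<open>auto simp: rho_upd\<close>)
  have rstep: "\<rho> k \<le> \<rho> (Suc k)" for k
    using rpos[of k] beta by (auto simp: rho_upd)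
  have rmono: "mono \<rho>" using rstep by (simp add: mono_iff_le_Suc)
  define t where "t j = r (Suc j) - 1" for j
  have rge: "n \<le> r n" for n using seq_suble[OF acc(1)] .
  have tS: "Suc (t j) = r (Suc j)" for j using rge[of "Suc j"] by (simp add: t_def)
  have tmono: "strict_mono t"
  proof (rule strict_monoI_Suc)
    fix j
    have "r (Suc j) < r (Suc (Suc j))" using acc(1) by (simp add: strict_mono_def)
    then show "t j < t (Suc j)" using tS[of j] tS[of "Suc j"] by simp
  qed
  define x where "x j = w (Suc (t j))" for j
  have xlim: "x \<longlonglongrightarrow> wbar"
  proof -
    have "(\<lambda>j. (w \<circ> r) (Suc j)) \<longlonglongrightarrow> wbar" using acc(2) by (rule LIMSEQ_Suc)
    then show ?thesis unfolding x_def tS comp_def .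
  qed
  define e where "e j = infdist (G (x j)) C" for j
  have e_lim: "e \<longlonglongrightarrow> infdist (G wbar) C"
    unfolding e_def by (intro tendsto_infdist isCont_tendsto_compose[OF Gc xlim])
  have e_nn: "0 \<le> e j" for j by (simp add: e_def infdist_nonneg)
  have projin: "projC C y \<in> C" for y
    unfolding projC_def using closest_point_in_set[OF C_closed C_ne] .
  have e0: "e \<longlonglongrightarrow> 0"
  proof (cases "bounded (range \<rho>)")
    case True
    then obtain M where M0: "\<forall>y\<in>range \<rho>. norm y \<le> M"
      unfolding bounded_iff by blast
    have M: "\<rho> k \<le> M" for k using M0 by (metis abs_le_D1 rangeI real_norm_def)
    define a where "a k = Vfun G C (\<rho> k) (w (Suc k)) (u k)" for k
    have "\<exists>K. \<forall>k\<ge>K. \<rho> (Suc k) = \<rho> k"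
    proof (rule ccontr)
      assume H: "\<not> ?thesis"
      have "\<exists>k. \<rho> k \<ge> \<rho> 0 * \<beta> ^ N" for N
      proof (induction N)
        case 0 then show ?case by auto
      next
        case (Suc N)
        then obtain k where k: "\<rho> k \<ge> \<rho> 0 * \<beta> ^ N" by blast
        from H obtain k' where k': "k' \<ge> k" "\<rho> (Suc k') \<noteq> \<rho> k'" by blast
        then have "\<rho> (Suc k') = \<beta> * \<rho> k'" by (auto simp: rho_upd split: if_splits)
        moreover have "\<rho> k' \<ge> \<rho> k" using rmono k'(1) by (simp add: mono_def)
        ultimately have "\<rho> (Suc k') \<ge> \<beta> * (\<rho> 0 * \<beta> ^ N)" using k beta by simp
        then show ?case by (auto simp: mult_ac)
      qed
      moreover obtain N where "M / \<rho> 0 < \<beta> ^ N" using real_arch_pow[OF beta] by blast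
      ultimately obtain k where "\<rho> k \<ge> \<rho> 0 * \<beta> ^ N" "M < \<rho> 0 * \<beta> ^ N"
        using rho0 by (auto simp: field_simps)
      then show False using M[of k] by simp
    qed
    then obtain K0 where K0: "\<And>k. k \<ge> K0 \<Longrightarrow> \<rho> (Suc k) = \<rho> k" by blast
    define K where "K = max K0 1"
    have astep: "a k \<le> \<eta> * a (k - 1)" if "k \<ge> K" for k
    proof -
      have "\<rho> (Suc k) = \<rho> k" "k \<noteq> 0" using K0[of k] that by (auto simp: K_def)
      moreover have "\<beta> * \<rho> k \<noteq> \<rho> k" using rpos[of k] beta by simp
      ultimately show ?thesis unfolding a_def using rho_upd[of k] by (auto split: if_splits)
    qed
    have ann: "0 \<le> a k" for k by (simp add: a_def Vfun_def)
    have ageo: "a (n + K) \<le> \<eta> ^ n * a K" for n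
    proof (induction n)
      case 0 then show ?case by simp
    next
      case (Suc n)
      have "a (Suc n + K) \<le> \<eta> * a (n + K)" using astep[of "Suc n + K"] by simp
      also have "\<dots> \<le> \<eta> * (\<eta> ^ n * a K)" using Suc eta by (simp add: mult_left_mono)
      finally show ?case by simp
    qed
    have "(\<lambda>n. \<eta> ^ n * a K) \<longlonglongrightarrow> 0"
      using LIMSEQ_power_zero[of \<eta>] eta by (intro tendsto_mult_left_zero) auto
    then have "(\<lambda>n. a (n + K)) \<longlonglongrightarrow> 0"
      by (rule Lim_null_comparison[rotated]) (use ann ageo in auto)
    then have "a \<longlonglongrightarrow> 0" by (rule LIMSEQ_offset)
    then have at: "(a \<circ> t) \<longlonglongrightarrow> 0" using tmono by (rule LIMSEQ_subseq_LIMSEQ)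
    have "e j \<le> (a \<circ> t) j" for j
    proof -
      have "e j \<le> dist (G (x j)) (projC C (G (w (Suc (t j))) + (1 / \<rho> (t j)) *\<^sub>R u (t j)))"
        unfolding e_def by (rule infdist_le[OF projin])
      then show ?thesis by (simp add: a_def Vfun_def x_def dist_norm)
    qed
    then show ?thesis
      by (intro Lim_null_comparison[OF _ at]) (use e_nn in auto)
  next
    case False
    then obtain B where B: "\<And>k. AL f G C (\<rho> k) (w (Suc k)) (u k) \<le> B" using hyp by blast
    have runb: "\<exists>k. \<rho> k > c" for c
    proof (rule ccontr)
      assume "\<not> ?thesis"
      then have "\<forall>k. norm (\<rho> k) \<le> max c 0" using rpos by (auto simp: not_less) (metis abs_of_pos max.coboundedI1 rpos)
      then have "bounded (range \<rho>)" unfolding bounded_iff by blast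
      then show False using False by simp
    qed
    have rinf: "filterlim \<rho> at_top sequentially"
    proof (subst filterlim_at_top, intro allI)
      fix Z
      obtain k where "\<rho> k > Z" using runb by blast
      then have "\<forall>n\<ge>k. Z \<le> \<rho> n" using rmono by (auto simp: mono_def intro: order.trans[of _ "\<rho> k"])
      then show "eventually (\<lambda>n. Z \<le> \<rho> n) sequentially" by (auto simp: eventually_sequentially)
    qed
    have rt: "filterlim (\<lambda>j. \<rho> (t j)) at_infinity sequentially"
      using filterlim_compose[OF rinf filterlim_subseq[OF tmono]]
      by (intro filterlim_at_top_imp_at_infinity) simp
    obtain MU where MU: "\<And>y. y \<in> U \<Longrightarrow> norm y \<le> MU" using U_bdd unfolding bounded_iff by blast
    define v where "v j = (1 / \<rho> (t j)) *\<^sub>R u (t j)" for j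
    define c where "c j = G (x j) + v j" for j
    define d where "d j = distC C (c j)" for j
    have v0: "v \<longlonglongrightarrow> 0"
    proof (rule Lim_null_comparison)
      show "eventually (\<lambda>j. norm (v j) \<le> MU / \<rho> (t j)) sequentially"
        proof (intro always_eventually allI)
        fix j
        have "norm (u (t j)) / \<rho> (t j) \<le> MU / \<rho> (t j)"
          using MU[OF u_in] rpos[of "t j"] by (simp add: divide_right_mono)
        then show "norm (v j) \<le> MU / \<rho> (t j)" using rpos[of "t j"] by (simp add: v_def)
      qed
      show "(\<lambda>j. MU / \<rho> (t j)) \<longlonglongrightarrow> 0" by (rule tendsto_divide_0[OF tendsto_const rt])
    qed
    have fx: "(\<lambda>j. f (x j)) \<longlonglongrightarrow> f wbar" by (rule isCont_tendsto_compose[OF fc xlim])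
    have d2: "(d j)\<^sup>2 \<le> 2 * (B - f (x j)) / \<rho> (t j)" for j
    proof -
      have "f (x j) + \<rho> (t j) / 2 * (d j)\<^sup>2 \<le> B"
        using B[of "t j"] by (simp add: AL_def d_def c_def v_def x_def)
      then show ?thesis using rpos[of "t j"] by (simp add: field_simps)
    qed
    have d2lim: "(\<lambda>j. (d j)\<^sup>2) \<longlonglongrightarrow> 0"
    proof (rule Lim_null_comparison)
      show "eventually (\<lambda>j. norm ((d j)\<^sup>2) \<le> 2 * (B - f (x j)) / \<rho> (t j)) sequentially"
        using d2 by simp
      show "(\<lambda>j. 2 * (B - f (x j)) / \<rho> (t j)) \<longlonglongrightarrow> 0"
        by (rule tendsto_divide_0[OF tendsto_mult[OF tendsto_const tendsto_diff[OF tendsto_const fx]] rt])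
    qed
    have dnn: "0 \<le> d j" for j by (simp add: d_def distC_def)
    have "(\<lambda>j. sqrt ((d j)\<^sup>2)) \<longlonglongrightarrow> sqrt 0" by (intro tendsto_real_sqrt d2lim)
    then have dlim: "d \<longlonglongrightarrow> 0" using dnn by simp
    have "e j \<le> d j + norm (v j)" for j
    proof -
      have "e j \<le> infdist (c j) C + dist (G (x j)) (c j)" unfolding e_def by (rule infdist_triangle)
      also have "infdist (c j) C \<le> d j"
        using infdist_le[OF projin, of "c j" "c j"] by (simp add: d_def distC_def dist_norm)
      also have "dist (G (x j)) (c j) = norm (v j)" by (simp add: c_def dist_norm)
      finally show ?thesis by simp
    qed
    moreover have "(\<lambda>j. d j + norm (v j)) \<longlonglongrightarrow> 0"
      using tendsto_add[OF dlim tendsto_norm[OF v0]] by simp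
    ultimately show ?thesis
      by (intro Lim_null_comparison[of e]) (use e_nn in auto)
  qed
  have "infdist (G wbar) C = 0" using LIMSEQ_unique[OF e_lim e0] .
  then show ?thesis using in_closed_iff_infdist_zero[OF C_closed C_ne] wbarD by blast
qed

end
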